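(* For every integer $N>1$ there exists a non-disjoint $(2^N,N,2^{N-1},(N-1)2^{N-2})$-SEDF (in $\mathbb{Z}_{2^N}$); in particular, non-disjoint SEDFs exist with any number $N\ge 2$ of sets.
   Context: Groups are written additively. For subsets $A,B$ of a group $G$, $\Delta(A,B)$ denotes the multiset $\{a-b: a\in A, b\in B\}$, and $\lambda G$ denotes the multiset containing each element of $G$ exactly $\lambda$ times. For a group $G$ of order $v$ and $m>1$, a family of $k$-subsets $\{A_1,\dots,A_m\}$ of $G$ (not required to be disjoint) is a non-disjoint $(v,m,k,\lambda)$-SEDF if for each $1\le i\le m$ the multiset union $\bigcup_{j\neq i}\Delta(A_i,A_j)$ equals $\lambda G$. *)

theory Defs
  imports Main "HOL-Library.Multiset"
begin

text \<open>The cyclic group Z_n is modelled by the integers {0..<n} with addition mod n.\<close>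

definition zn :: "nat \<Rightarrow> int set" where
  "zn n = {0..<int n}"

definition diff_mset :: "nat \<Rightarrow> int set \<Rightarrow> int set \<Rightarrow> int multiset" where
  "diff_mset n A B = image_mset (\<lambda>(a, b). (a - b) mod int n) (mset_set (A \<times> B))"

definition lam_group :: "nat \<Rightarrow> nat \<Rightarrow> int multiset" where
  "lam_group n lam = repeat_mset lam (mset_set (zn n))"

definition nondisjoint_sedf ::
  "nat \<Rightarrow> nat \<Rightarrow> nat \<Rightarrow> nat \<Rightarrow> (nat \<Rightarrow> int set) \<Rightarrow> bool" where
  "nondisjoint_sedf v m k lam A \<longleftrightarrow>
     m > 1 \<and>
     (\<forall>i<m. A i \<subseteq> zn v \<and> card (A i) = k) \<and>
     (\<forall>i<m. (\<Sum>j\<in>{..<m} - {i}. diff_mset v (A i) (A j)) = lam_group v lam)"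

end

theory Submission
  imports Defs
begin

lemma card_image_mset_set:
  assumes "finite S"
  shows "count (image_mset f (mset_set S)) x = card {y\<in>S. f y = x}"
  using assms by (simp add: count_image_mset Int_def conj_commute)

lemma shift_card:
  fixes M e :: int
  assumes M: "M > 0" and per: "\<And>x. P x = P (x mod M)"
  shows "card {b\<in>{0..<M}. P (b + e)} = card {b\<in>{0..<M}. P b}"
proof -
  let ?f = "\<lambda>b. (b + e) mod M"
  have inj: "inj_on ?f {b\<in>{0..<M}. P (b + e)}"
  proof (rule inj_onI)
    fix x y assume x: "x \<in> {b\<in>{0..<M}. P (b + e)}" and y: "y \<in> {b\<in>{0..<M}. P (b + e)}"
      and eq: "?f x = ?f y"
    have "x mod M = y mod M" using eq by (metis add_diff_cancel_right' mod_diff_cong)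
    then show "x = y" using x y by simp
  qed
  have img: "?f ` {b\<in>{0..<M}. P (b + e)} = {b\<in>{0..<M}. P b}"
  proof
    show "?f ` {b\<in>{0..<M}. P (b + e)} \<subseteq> {b\<in>{0..<M}. P b}"
      using M per by auto
    show "{b\<in>{0..<M}. P b} \<subseteq> ?f ` {b\<in>{0..<M}. P (b + e)}"
    proof
      fix c assume c: "c \<in> {b\<in>{0..<M}. P b}"
      let ?b = "(c - e) mod M"
      have "?f ?b = c" using c by (simp add: mod_add_left_eq)
      moreover have "P (?b + e)" using c per[of "?b + e"] \<open>?f ?b = c\<close> by simp
      moreover have "?b \<in> {0..<M}" using M by simp
      ultimately have "?b \<in> {b\<in>{0..<M}. P (b + e)} \<and> c = ?f ?b" by simp
      then show "c \<in> ?f ` {b\<in>{0..<M}. P (b + e)}" by blast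
    qed
  qed
  show ?thesis using card_image[OF inj] img by simp
qed

lemma rep_card:
  fixes M :: int
  assumes M: "M > 0" and per: "\<And>x. P x = P (x mod M)"
  shows "card {b\<in>{0..<int k * M}. P b} = k * card {b\<in>{0..<M}. P b}"
proof (induction k)
  case 0 then show ?case by simp
next
  case (Suc k)
  have split: "{b\<in>{0..<int (Suc k) * M}. P b} = {b\<in>{0..<int k * M}. P b} \<union> ((\<lambda>b. b + int k * M) ` {b\<in>{0..<M}. P b})"
  proof -
    have per2: "P (b + int k * M) = P b" for b using per[of "b + int k * M"] per[of b] by simp
    show ?thesis
    proof (intro equalityI subsetI)
      fix b assume b: "b \<in> {b\<in>{0..<int (Suc k) * M}. P b}"
      show "b \<in> {b\<in>{0..<int k * M}. P b} \<union> ((\<lambda>b. b + int k * M) ` {b\<in>{0..<M}. P b})"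
      proof (cases "b < int k * M")
        case True then show ?thesis using b by simp
      next
        case False
        then have "b - int k * M \<in> {b\<in>{0..<M}. P b}" using b per2[of "b - int k * M"] by (simp add: algebra_simps)
        then show ?thesis by (metis (no_types, lifting) UnI2 diff_add_cancel image_eqI)
      qed
    next
      fix b assume "b \<in> {b\<in>{0..<int k * M}. P b} \<union> ((\<lambda>b. b + int k * M) ` {b\<in>{0..<M}. P b})"
      then show "b \<in> {b\<in>{0..<int (Suc k) * M}. P b}" using M per2 by (auto simp: algebra_simps)
    qed
  qed
  have fin: "finite {b\<in>{0..<X}. P b}" for X :: int
    by (rule finite_subset[of _ "{0..<X}"]) auto
  have disj: "{b\<in>{0..<int k * M}. P b} \<inter> ((\<lambda>b. b + int k * M) ` {b\<in>{0..<M}. P b}) = {}"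
    by auto
  have "card {b\<in>{0..<int (Suc k) * M}. P b} = card {b\<in>{0..<int k * M}. P b} + card ((\<lambda>b. b + int k * M) ` {b\<in>{0..<M}. P b})"
    unfolding split by (rule card_Un_disjoint) (use disj fin in auto)
  also have "card ((\<lambda>b. b + int k * M) ` {b\<in>{0..<M}. P b}) = card {b\<in>{0..<M}. P b}"
    by (rule card_image) (auto simp: inj_on_def)
  finally show ?case using Suc by simp
qed

lemma half_card:
  "card {b\<in>{0..<(2::int)^(p+1)}. b mod 2^(p+1) < 2^p} = 2^p"
proof -
  have "{b\<in>{0..<(2::int)^(p+1)}. b mod 2^(p+1) < 2^p} = {0..<2^p}"
    by auto
  then show ?thesis by simp
qed

lemma main_count:
  fixes e :: int
  assumes pq: "p < q" and qN: "q < N"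
  shows "card {b\<in>{0..<(2::int)^N}. b mod 2^(q+1) < 2^q \<and> (b+e) mod 2^(p+1) < 2^p} = 2^(N-2)"
proof -
  define P where "P b = (b mod 2^(q+1) < (2::int)^q \<and> (b+e) mod 2^(p+1) < 2^p)" for b :: int
  have dv: "(2::int)^(p+1) dvd 2^(q+1)" using pq by (simp add: le_imp_power_dvd)
  have perP: "P x = P (x mod 2^(q+1))" for x
  proof -
    have "(x mod 2^(q+1) + e) mod 2^(p+1) = ((x mod 2^(q+1)) mod 2^(p+1) + e) mod (2::int)^(p+1)"
      by (simp add: mod_add_left_eq)
    also have "\<dots> = (x + e) mod 2^(p+1)" using dv by (simp add: mod_mod_cancel mod_add_left_eq)
    finally show ?thesis unfolding P_def by simp
  qed
  have "N = (N-q-1) + (q+1)" using qN by simp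
  then have e1: "(2::int)^N = int (2^(N-q-1)) * 2^(q+1)"
    by (metis of_nat_numeral of_nat_power power_add)
  have c1: "card {b\<in>{0..<(2::int)^N}. P b} = 2^(N-q-1) * card {b\<in>{0..<(2::int)^(q+1)}. P b}"
    unfolding e1 by (rule rep_card) (simp, rule perP)
  have s2: "{b\<in>{0..<(2::int)^(q+1)}. P b} = {b\<in>{0..<(2::int)^q}. (b+e) mod 2^(p+1) < 2^p}"
  proof -
    have "b mod 2^(q+1) = b" if "0 \<le> b" "b < 2^(q+1)" for b :: int using that by simp
    then show ?thesis unfolding P_def by force
  qed
  have "q = (q-p-1) + (p+1)" using pq by simp
  then have e2: "(2::int)^q = int (2^(q-p-1)) * 2^(p+1)"
    by (metis of_nat_numeral of_nat_power power_add)
  have c3: "card {b\<in>{0..<(2::int)^q}. (b+e) mod 2^(p+1) < 2^p} = 2^(q-p-1) * card {b\<in>{0..<(2::int)^(p+1)}. (b+e) mod 2^(p+1) < 2^p}"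
    unfolding e2 by (rule rep_card) (simp, simp add: mod_add_left_eq)
  have c4: "card {b\<in>{0..<(2::int)^(p+1)}. (b+e) mod 2^(p+1) < 2^p} = card {b\<in>{0..<(2::int)^(p+1)}. b mod 2^(p+1) < 2^p}"
    by (rule shift_card[where P="\<lambda>b. b mod 2^(p+1) < 2^p"]) simp_all
  have "(2::nat)^(N-q-1) * (2^(q-p-1) * 2^p) = 2^(N-2)"
    using pq qN by (simp flip: power_add)
  then show ?thesis using c1 s2 c3 c4 half_card[of p] unfolding P_def by simp
qed

lemma pair_count:
  fixes i j N :: nat and e :: int
  assumes "i < N" "j < N" "i \<noteq> j"
  shows "card {b\<in>{0..<(2::int)^N}. b mod 2^(j+1) < 2^j \<and> (b+e) mod 2^(i+1) < 2^i} = 2^(N-2)"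
proof (cases "i < j")
  case True then show ?thesis using main_count assms by blast
next
  case False
  then have ji: "j < i" using assms by simp
  define P where "P b = ((b - e) mod 2^(j+1) < (2::int)^j \<and> b mod 2^(i+1) < 2^i)" for b :: int
  have dvi: "(2::int)^(i+1) dvd 2^N" using assms le_imp_power_dvd[of "i+1" N "2::int"] by simp
  have dvj: "(2::int)^(j+1) dvd 2^N" using assms le_imp_power_dvd[of "j+1" N "2::int"] by simp
  have per: "P x = P (x mod 2^N)" for x
  proof -
    have "(x mod 2^N - e) mod 2^(j+1) = ((x mod 2^N) mod 2^(j+1) - e) mod (2::int)^(j+1)"
      by (simp add: mod_diff_left_eq)
    also have "\<dots> = (x - e) mod 2^(j+1)" using dvj by (simp add: mod_mod_cancel mod_diff_left_eq)
    finally show ?thesis unfolding P_def using dvi by (simp add: mod_mod_cancel)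
  qed
  have "card {b\<in>{0..<(2::int)^N}. P (b + e)} = card {b\<in>{0..<(2::int)^N}. P b}"
    by (rule shift_card) (simp, rule per)
  moreover have "card {b\<in>{0..<(2::int)^N}. P b} = 2^(N-2)"
  proof -
    have "{b\<in>{0..<(2::int)^N}. P b} = {b\<in>{0..<(2::int)^N}. b mod 2^(i+1) < 2^i \<and> (b+(-e)) mod 2^(j+1) < 2^j}"
      unfolding P_def by auto
    then show ?thesis using main_count[OF ji assms(1), of "-e"] by simp
  qed
  ultimately show ?thesis unfolding P_def by (simp add: conj_commute)
qed

definition AA :: "nat \<Rightarrow> nat \<Rightarrow> int set" where
  "AA N k = {x \<in> zn (2^N). x mod 2^(k+1) < 2^k}"

lemma zn_pow: "zn (2^N) = {0..<(2::int)^N}"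
  unfolding zn_def by simp

lemma AA_card:
  assumes "k < N" shows "card (AA N k) = 2^(N-1)"
proof -
  have "N = (N-k-1) + (k+1)" using assms by simp
  then have e1: "(2::int)^N = int (2^(N-k-1)) * 2^(k+1)"
    by (metis of_nat_numeral of_nat_power power_add)
  have "card (AA N k) = 2^(N-k-1) * card {b\<in>{0..<(2::int)^(k+1)}. b mod 2^(k+1) < 2^k}"
    unfolding AA_def zn_pow e1 by (rule rep_card) simp_all
  also have "\<dots> = 2^(N-k-1) * 2^k" using half_card[of k] by simp
  also have "\<dots> = 2^(N-1)" using assms by (simp flip: power_add)
  finally show ?thesis .
qed

lemma AA_inj: "inj_on (AA N) {..<N}"
proof (rule inj_onI)
  have key: "AA N i \<noteq> AA N j" if "i < j" "j < N" for i j
  proof -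
    have lt: "(2::int)^i < 2^j" "(2::int)^j < 2^N" using that by simp_all
    have "(2::int)^i mod 2^(i+1) = 2^i" by simp
    then have n1: "(2::int)^i \<notin> AA N i" unfolding AA_def by simp
    have lt2: "(2::int)^i < 2^(j+1)" using that by (intro power_strict_increasing) auto
    moreover have "(2::int)^i mod 2^(j+1) = 2^i"
      using lt2 by (intro mod_pos_pos_trivial) simp_all
    then have "(2::int)^i \<in> AA N j" unfolding AA_def zn_pow using lt by simp
    then show ?thesis using n1 by blast
  qed
  fix i j assume "i \<in> {..<N}" "j \<in> {..<N}" "AA N i = AA N j"
  then show "i = j" using key by (metis lessThan_iff linorder_neqE_nat)
qed

lemma AA_diff:
  assumes ij: "i < N" "j < N" "i \<noteq> j"
  shows "diff_mset (2^N) (AA N i) (AA N j) = repeat_mset (2^(N-2)) (mset_set (zn (2^N)))"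
proof (rule multiset_eqI)
  fix d :: int
  define v where "v = (2::int)^N"
  have vpos: "v > 0" unfolding v_def by simp
  have sub: "AA N k \<subseteq> {0..<v}" for k unfolding AA_def zn_pow v_def by auto
  have fin: "finite (AA N i \<times> AA N j)"
    using sub by (meson finite_SigmaI finite_atLeastLessThan_int finite_subset)
  have lhs: "count (diff_mset (2^N) (AA N i) (AA N j)) d = card {y \<in> AA N i \<times> AA N j. (\<lambda>(a,b). (a-b) mod v) y = d}"
    unfolding diff_mset_def v_def using card_image_mset_set[OF fin] by simp
  show "count (diff_mset (2^N) (AA N i) (AA N j)) d = count (repeat_mset (2^(N-2)) (mset_set (zn (2^N)))) d"
  proof (cases "d \<in> {0..<v}")
    case True
    have dv: "(2::int)^(i+1) dvd v" unfolding v_def using ij le_imp_power_dvd[of "i+1" N "2::int"] by simp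
    have S: "{y \<in> AA N i \<times> AA N j. (\<lambda>(a,b). (a-b) mod v) y = d} = (\<lambda>b. ((b+d) mod v, b)) ` {b\<in>AA N j. (b+d) mod v \<in> AA N i}"
    proof (intro equalityI subsetI)
      fix y assume y: "y \<in> {y \<in> AA N i \<times> AA N j. (\<lambda>(a,b). (a-b) mod v) y = d}"
      obtain a b where ab: "y = (a,b)" by fastforce
      have a: "a \<in> AA N i" and b: "b \<in> AA N j" and e: "(a-b) mod v = d" using y ab by auto
      have "a \<in> {0..<v}" using a sub by blast
      have "(b+d) mod v = (b + (a-b) mod v) mod v" using e by simp
      also have "\<dots> = a mod v" by (simp add: mod_add_right_eq)
      also have "\<dots> = a" using \<open>a \<in> {0..<v}\<close> by simp
      finally have "(b+d) mod v = a" .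
      then show "y \<in> (\<lambda>b. ((b+d) mod v, b)) ` {b\<in>AA N j. (b+d) mod v \<in> AA N i}"
        using a b ab by auto
    next
      fix y assume "y \<in> (\<lambda>b. ((b+d) mod v, b)) ` {b\<in>AA N j. (b+d) mod v \<in> AA N i}"
      then obtain b where b: "b \<in> AA N j" "(b+d) mod v \<in> AA N i" and yb: "y = ((b+d) mod v, b)" by auto
      have "((b+d) mod v - b) mod v = d mod v" by (simp add: mod_diff_left_eq)
      also have "\<dots> = d" using True by simp
      finally show "y \<in> {y \<in> AA N i \<times> AA N j. (\<lambda>(a,b). (a-b) mod v) y = d}"
        using b yb by simp
    qed
    have "card {y \<in> AA N i \<times> AA N j. (\<lambda>(a,b). (a-b) mod v) y = d} = card {b\<in>AA N j. (b+d) mod v \<in> AA N i}"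
      unfolding S by (rule card_image) (auto simp: inj_on_def)
    also have "{b\<in>AA N j. (b+d) mod v \<in> AA N i} = {b\<in>{0..<(2::int)^N}. b mod 2^(j+1) < 2^j \<and> (b+d) mod 2^(i+1) < 2^i}"
    proof -
      have "(b+d) mod v mod 2^(i+1) = (b+d) mod 2^(i+1)" for b using dv by (simp add: mod_mod_cancel)
      moreover have "(b+d) mod v \<in> zn (2^N)" for b unfolding zn_pow using vpos v_def by simp
      ultimately show ?thesis unfolding AA_def zn_pow by auto
    qed
    also have "card \<dots> = 2^(N-2)" by (rule pair_count[OF ij])
    finally show ?thesis using lhs True unfolding zn_pow v_def by simp
  next
    case False
    have E: "{y \<in> AA N i \<times> AA N j. (\<lambda>(a,b). (a-b) mod v) y = d} = {}"
      using False vpos by auto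
    have "count (diff_mset (2^N) (AA N i) (AA N j)) d = 0" unfolding lhs E by simp
    then show ?thesis using False unfolding zn_pow v_def by simp
  qed
qed

lemma sum_repeat:
  "finite S \<Longrightarrow> (\<Sum>j\<in>S. repeat_mset c M) = repeat_mset (card S * c) M"
  by (induction S rule: finite_induct) (auto simp: repeat_mset_distrib)

theorem corollary3p6:
  fixes N :: nat
  assumes "N > 1"
  shows "\<exists>A :: nat \<Rightarrow> int set. inj_on A {..<N} \<and>
           nondisjoint_sedf (2 ^ N) N (2 ^ (N - 1)) ((N - 1) * 2 ^ (N - 2)) A"
proof (intro exI conjI)
  show "inj_on (AA N) {..<N}" by (rule AA_inj)
  show "nondisjoint_sedf (2 ^ N) N (2 ^ (N - 1)) ((N - 1) * 2 ^ (N - 2)) (AA N)"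
    unfolding nondisjoint_sedf_def
  proof (intro conjI allI impI)
    show "N > 1" by (rule assms)
  next
    fix i assume "i < N"
    show "AA N i \<subseteq> zn (2^N)" unfolding AA_def by auto
  next
    fix i assume "i < N"
    then show "card (AA N i) = 2^(N-1)" by (rule AA_card)
  next
    fix i assume i: "i < N"
    have "(\<Sum>j\<in>{..<N} - {i}. diff_mset (2^N) (AA N i) (AA N j)) = (\<Sum>j\<in>{..<N} - {i}. repeat_mset (2^(N-2)) (mset_set (zn (2^N))))"
      using i by (intro sum.cong refl AA_diff) auto
    also have "\<dots> = repeat_mset (card ({..<N} - {i}) * 2^(N-2)) (mset_set (zn (2^N)))"
      by (rule sum_repeat) simp
    also have "card ({..<N} - {i}) = N - 1" using i by simp
    finally show "(\<Sum>j\<in>{..<N} - {i}. diff_mset (2^N) (AA N i) (AA N j)) = lam_group (2^N) ((N - 1) * 2 ^ (N - 2))"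
      unfolding lam_group_def .
  qed
qed

end
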